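(* Let $k$ be a positive integer. If $m$ and $n$ are positive integers with $m\equiv n\pmod k$, then $R_k^m\cong R_k^n$.
   Context: $\mathbb{N}=\{1,2,3,\dots\}$. $R$ denotes the ring of all $\mathbb{N}\times\mathbb{N}$ integer matrices with only finitely many nonzero entries in each row and each column, with entrywise addition and multiplication $(AB)_{i,j}=\sum_{l\ge1}a_{i,l}b_{l,j}$. Fix a positive integer $k$. Partition $\mathbb{N}$ into consecutive blocks $J_1=\{1\}$ and, for $m\ge2$, $J_m=\{2+k(m-2),\dots,1+k(m-1)\}$. For $A\in R$, the block $A^{m,n}$ is the submatrix with rows indexed by $J_m$ and columns by $J_n$. $R_k$ is the subring of $A\in R$ such that for all but finitely many pairs $(m,n)$ with $m,n\ge2$, $A^{m,n}=cI_k$ for some integer $c$. For a ring $S$, $S^n$ is the free left $S$-module of $n$-tuples with componentwise operations; $S^m\cong S^n$ means there is a bijective left-$S$-linear map $S^m\to S^n$, equivalently there exist $X\in M_{m\times n}(S)$, $Y\in M_{n\times m}(S)$ with $XY=I_m$, $YX=I_n$. *)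

theory Defs
  imports Main
begin

(* Matrices N x N are represented 0-indexed: paper index i (i >= 1) is position i - 1. *)
type_synonym imat = "nat \<Rightarrow> nat \<Rightarrow> int"

definition in_R :: "imat \<Rightarrow> bool" where
  "in_R A \<longleftrightarrow> (\<forall>i. finite {j. A i j \<noteq> 0}) \<and> (\<forall>j. finite {i. A i j \<noteq> 0})"

(* (AB)_{ij} = sum over l of a_{il} b_{lj}; the sum ranges over the (finite, for A in R)
   support of row i of A. *)
definition mmul :: "imat \<Rightarrow> imat \<Rightarrow> imat" where
  "mmul A B = (\<lambda>i j. \<Sum>l\<in>{l. A i l \<noteq> 0}. A i l * B l j)"

definition idR :: imat where
  "idR = (\<lambda>i j. if i = j then 1 else 0)"

(* Block A^{m,n} for m,n >= 2: rows J_m = {2+k(m-2),...,1+k(m-1)} (paper indexing),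
   i.e. 0-indexed positions 1+k(m-2)+a for a < k. *)
definition blk :: "nat \<Rightarrow> imat \<Rightarrow> nat \<Rightarrow> nat \<Rightarrow> nat \<Rightarrow> nat \<Rightarrow> int" where
  "blk k A m n a b = A (1 + k * (m - 2) + a) (1 + k * (n - 2) + b)"

definition in_Rk :: "nat \<Rightarrow> imat \<Rightarrow> bool" where
  "in_Rk k A \<longleftrightarrow> in_R A \<and>
     finite {(m, n). m \<ge> 2 \<and> n \<ge> 2 \<and>
        \<not> (\<exists>c::int. \<forall>a<k. \<forall>b<k. blk k A m n a b = (if a = b then c else 0))}"

(* R_k^m \<cong> R_k^n: exist X in M_{m x n}(R_k), Y in M_{n x m}(R_k) with XY = I_m, YX = I_n. *)
definition free_iso :: "nat \<Rightarrow> nat \<Rightarrow> nat \<Rightarrow> bool" where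
  "free_iso k m n \<longleftrightarrow> (\<exists>X Y :: nat \<Rightarrow> nat \<Rightarrow> imat.
     (\<forall>i<m. \<forall>j<n. in_Rk k (X i j)) \<and> (\<forall>i<n. \<forall>j<m. in_Rk k (Y i j)) \<and>
     (\<forall>i<m. \<forall>j<m. (\<lambda>r s. \<Sum>l<n. mmul (X i l) (Y l j) r s) = (if i = j then idR else (\<lambda>r s. 0))) \<and>
     (\<forall>i<n. \<forall>j<n. (\<lambda>r s. \<Sum>l<m. mmul (Y i l) (X l j) r s) = (if i = j then idR else (\<lambda>r s. 0))))"

end

theory Submission
  imports Defs
begin

definition Xm :: "(nat \<Rightarrow> nat \<Rightarrow> nat \<times> nat) \<Rightarrow> nat \<Rightarrow> nat \<Rightarrow> imat" where
  "Xm g i l = (\<lambda>r s. if g l s = (i, r) then 1 else 0)"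

definition Ym :: "(nat \<Rightarrow> nat \<Rightarrow> nat \<times> nat) \<Rightarrow> nat \<Rightarrow> nat \<Rightarrow> imat" where
  "Ym g l j = (\<lambda>u s. if g l u = (j, s) then 1 else 0)"

lemma blk_eq:
  fixes k h x a b :: nat
  assumes "a < k" "b < k"
  shows "(k*h+b = k*x+a) \<longleftrightarrow> (h = x \<and> a = b)"
proof
  assume e: "k*h+b = k*x+a"
  have "(k*h+b) div k = h" "(k*h+b) mod k = b" using assms by auto
  moreover have "(k*x+a) div k = x" "(k*x+a) mod k = a" using assms by auto
  ultimately show "h = x \<and> a = b" using e by metis
qed auto

locale isoData =
  fixes k m n :: nat and g hinv :: "nat \<Rightarrow> nat \<Rightarrow> nat \<times> nat"
  assumes gm: "\<And>l s. l < n \<Longrightarrow> fst (g l s) < m"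
    and hn: "\<And>i r. i < m \<Longrightarrow> fst (hinv i r) < n"
    and hg: "\<And>l s. l < n \<Longrightarrow> hinv (fst (g l s)) (snd (g l s)) = (l, s)"
    and gh: "\<And>i r. i < m \<Longrightarrow> g (fst (hinv i r)) (snd (hinv i r)) = (i, r)"
    and al: "\<And>l \<beta>. l < n \<Longrightarrow> \<exists>i' h. \<forall>b<k. g l (1+k*\<beta>+b) = (i', 1+k*h+b)"
begin

lemma g_inj: "l < n \<Longrightarrow> g l u = (i, r) \<Longrightarrow> hinv i r = (l, u)"
  using hg[of l u] by simp

lemma X_R: assumes "i < m" "l < n" shows "in_Rk k (Xm g i l)"
proof -
  have R: "in_R (Xm g i l)"
    unfolding in_R_def
  proof safe
    fix r
    have "{s. Xm g i l r s \<noteq> 0} \<subseteq> {snd (hinv i r)}"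
      using g_inj[OF assms(2)] by (auto simp: Xm_def)
    then show "finite {s. Xm g i l r s \<noteq> 0}" using finite_subset by blast
  next
    fix s
    have "{r. Xm g i l r s \<noteq> 0} \<subseteq> {snd (g l s)}"
      by (auto simp: Xm_def)
    then show "finite {r. Xm g i l r s \<noteq> 0}" using finite_subset by blast
  qed
  moreover have E: "{(p, q). p \<ge> 2 \<and> q \<ge> 2 \<and>
        \<not> (\<exists>c::int. \<forall>a<k. \<forall>b<k. blk k (Xm g i l) p q a b = (if a = b then c else 0))} = {}"
  proof -
    { fix p q :: nat
      obtain i' h where H: "\<forall>b<k. g l (1+k*(q-2)+b) = (i', 1+k*h+b)"
        using al[OF assms(2)] by blast
      have "\<forall>a<k. \<forall>b<k. blk k (Xm g i l) p q a b =
            (if a = b then (if i' = i \<and> h = p - 2 then 1 else 0) else 0)"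
        using H blk_eq[where k=k and h=h and x="p-2"] by (auto simp: blk_def Xm_def)
      hence "\<exists>c::int. \<forall>a<k. \<forall>b<k. blk k (Xm g i l) p q a b = (if a = b then c else 0)"
        by blast }
    then show ?thesis by auto
  qed
  show ?thesis unfolding in_Rk_def using R by (subst E) simp
qed

lemma Y_R: assumes "l < n" "j < m" shows "in_Rk k (Ym g l j)"
proof -
  have R: "in_R (Ym g l j)"
    unfolding in_R_def
  proof safe
    fix u
    have "{s. Ym g l j u s \<noteq> 0} \<subseteq> {snd (g l u)}"
      by (auto simp: Ym_def)
    then show "finite {s. Ym g l j u s \<noteq> 0}" using finite_subset by blast
  next
    fix s
    have "{u. Ym g l j u s \<noteq> 0} \<subseteq> {snd (hinv j s)}"
      using g_inj[OF assms(1)] by (auto simp: Ym_def)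
    then show "finite {u. Ym g l j u s \<noteq> 0}" using finite_subset by blast
  qed
  moreover have E: "{(p, q). p \<ge> 2 \<and> q \<ge> 2 \<and>
        \<not> (\<exists>c::int. \<forall>a<k. \<forall>b<k. blk k (Ym g l j) p q a b = (if a = b then c else 0))} = {}"
  proof -
    { fix p q :: nat
      obtain i' h where H: "\<forall>b<k. g l (1+k*(p-2)+b) = (i', 1+k*h+b)"
        using al[OF assms(1)] by blast
      have "\<forall>a<k. \<forall>b<k. blk k (Ym g l j) p q a b =
            (if a = b then (if i' = j \<and> h = q - 2 then 1 else 0) else 0)"
        using H blk_eq[where k=k and h=h and x="q-2"] by (auto simp: blk_def Ym_def)
      hence "\<exists>c::int. \<forall>a<k. \<forall>b<k. blk k (Ym g l j) p q a b = (if a = b then c else 0)"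
        by blast }
    then show ?thesis by auto
  qed
  show ?thesis unfolding in_Rk_def using R by (subst E) simp
qed

lemma XY: assumes "i < m" "j < m"
  shows "(\<lambda>r s. \<Sum>l<n. mmul (Xm g i l) (Ym g l j) r s) = (if i = j then idR else (\<lambda>r s. 0))"
proof (intro ext)
  fix r s
  obtain l0 u0 where h0: "hinv i r = (l0, u0)" by fastforce
  have l0: "l0 < n" using hn[OF assms(1), of r] h0 by simp
  have g0: "g l0 u0 = (i, r)" using gh[OF assms(1), of r] h0 by simp
  have "mmul (Xm g i l) (Ym g l j) r s = (if l = l0 then (if (i, r) = (j, s) then 1 else 0) else 0)"
    if "l < n" for l
  proof -
    have S: "{u. Xm g i l r u \<noteq> 0} = (if l = l0 then {u0} else {})"
    proof
      show "{u. Xm g i l r u \<noteq> 0} \<subseteq> (if l = l0 then {u0} else {})"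
      proof
        fix u assume "u \<in> {u. Xm g i l r u \<noteq> 0}"
        hence "g l u = (i, r)" by (auto simp: Xm_def split: if_splits)
        hence "hinv i r = (l, u)" using g_inj[OF that] by blast
        thus "u \<in> (if l = l0 then {u0} else {})" using h0 by auto
      qed
    qed (use g0 in \<open>auto simp: Xm_def\<close>)
    show ?thesis unfolding mmul_def S using g0 by (auto simp: Xm_def Ym_def)
  qed
  hence "(\<Sum>l<n. mmul (Xm g i l) (Ym g l j) r s) =
         (\<Sum>l<n. (if l = l0 then (if (i, r) = (j, s) then 1 else 0) else 0))"
    by (intro sum.cong) auto
  also have "\<dots> = (if (i, r) = (j, s) then 1 else 0)" using l0 by simp
  finally show "(\<Sum>l<n. mmul (Xm g i l) (Ym g l j) r s) = (if i = j then idR else (\<lambda>r s. 0)) r s"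
    by (auto simp: idR_def)
qed

lemma YX: assumes "i < n" "j < n"
  shows "(\<lambda>r s. \<Sum>l<m. mmul (Ym g i l) (Xm g l j) r s) = (if i = j then idR else (\<lambda>r s. 0))"
proof (intro ext)
  fix r s
  obtain l0 u0 where h0: "g i r = (l0, u0)" by fastforce
  have l0: "l0 < m" using gm[OF assms(1), of r] h0 by simp
  have "mmul (Ym g i l) (Xm g l j) r s = (if l = l0 then (if g j s = (l0, u0) then 1 else 0) else 0)"
    if "l < m" for l
  proof -
    have S: "{u. Ym g i l r u \<noteq> 0} = (if l = l0 then {u0} else {})"
      using h0 by (auto simp: Ym_def)
    show ?thesis unfolding mmul_def S by (auto simp: Xm_def Ym_def h0)
  qed
  hence "(\<Sum>l<m. mmul (Ym g i l) (Xm g l j) r s) =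
         (\<Sum>l<m. (if l = l0 then (if g j s = (l0, u0) then 1 else 0) else 0))"
    by (intro sum.cong) auto
  also have "\<dots> = (if g j s = (l0, u0) then 1 else 0)" using l0 by simp
  also have "\<dots> = (if (i, r) = (j, s) then 1 else 0)"
    using g_inj[OF assms(2), of s] g_inj[OF assms(1), of r] h0 by (auto)
  finally show "(\<Sum>l<m. mmul (Ym g i l) (Xm g l j) r s) = (if i = j then idR else (\<lambda>r s. 0)) r s"
    by (auto simp: idR_def)
qed

lemma iso: "free_iso k m n"
  unfolding free_iso_def
  apply (rule exI[of _ "\<lambda>i l. Xm g i l"], rule exI[of _ "\<lambda>l j. Ym g l j"])
  using X_R Y_R XY YX by auto

end


lemma free_iso_sym: "free_iso k m n \<Longrightarrow> free_iso k n m"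
  unfolding free_iso_def by blast

definition fc :: "nat \<Rightarrow> nat \<Rightarrow> nat \<Rightarrow> nat \<Rightarrow> nat" where
  "fc k t c s = (case s of 0 \<Rightarrow> c | Suc p \<Rightarrow> 1 + k*(t + (1+t*k)*(p div k) + c) + p mod k)"

definition gc :: "nat \<Rightarrow> nat \<Rightarrow> nat \<Rightarrow> nat \<Rightarrow> nat \<Rightarrow> nat \<times> nat" where
  "gc k m t l s = (if l < m - 1 then (l, s) else (m - 1, fc k t (l - (m - 1)) s))"

definition hc :: "nat \<Rightarrow> nat \<Rightarrow> nat \<Rightarrow> nat \<Rightarrow> nat \<Rightarrow> nat \<times> nat" where
  "hc k m t i r = (if i < m - 1 then (i, r) else if r < 1 + t*k then (m - 1 + r, 0)
     else (m - 1 + ((r - 1) div k - t) mod (1+t*k), Suc (k*(((r - 1) div k - t) div (1+t*k)) + (r - 1) mod k)))"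

lemma divmod_aux:
  fixes k q b :: nat assumes "b < k"
  shows "(k*q + b) div k = q" "(k*q + b) mod k = b"
  using assms by auto

lemma hg_case:
  fixes k t c p m :: nat
  assumes k: "k > 0" and c: "c < 1 + t*k"
  shows "hc k m t (m - 1) (fc k t c (Suc p)) = (m - 1 + c, Suc p)"
proof -
  define N where "N = 1 + t*k"
  define q where "q = p div k"
  define b where "b = p mod k"
  have b: "b < k" using k by (simp add: b_def)
  have p: "p = k*q + b" by (simp add: q_def b_def)
  have r: "fc k t c (Suc p) = 1 + (k*(t + N*q + c) + b)"
    by (simp add: fc_def N_def q_def b_def)
  have r1: "fc k t c (Suc p) - 1 = k*(t + N*q + c) + b" using r by simp
  have d: "(fc k t c (Suc p) - 1) div k = t + N*q + c" "(fc k t c (Suc p) - 1) mod k = b"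
    using r1 divmod_aux[OF b] by simp_all
  have ge: "\<not> fc k t c (Suc p) < 1 + t*k"
  proof -
    have "k*t \<le> k*(t + N*q + c)" by (intro mult_le_mono2) simp
    hence "t*k \<le> k*(t + N*q + c) + b" by (metis mult.commute trans_le_add1)
    thus ?thesis using r by linarith
  qed
  have cN: "c < N" using c by (simp add: N_def)
  have e1: "(N*q + c) mod N = c" "(N*q + c) div N = q" using cN by auto
  have "t + N*q + c - t = N*q + c" by simp
  have Ns: "Suc (t*k) = N" by (simp add: N_def)
  thus ?thesis unfolding hc_def using ge d e1 p
    by (simp add: Ns)
qed

lemma gh_case:
  fixes k t r m :: nat
  assumes k: "k > 0" and r: "\<not> r < 1 + t*k"
  shows "fc k t (((r - 1) div k - t) mod (1+t*k)) (Suc (k*(((r - 1) div k - t) div (1+t*k)) + (r - 1) mod k)) = r"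
proof -
  define N where "N = 1 + t*k"
  define p where "p = r - 1"
  define c' where "c' = p div k - t"
  have b: "p mod k < k" using k by simp
  have pt: "t \<le> p div k"
  proof -
    have "t*k \<le> p" using r by (simp add: p_def)
    hence "t*k div k \<le> p div k" by (rule div_le_mono)
    thus ?thesis using k by simp
  qed
  have "fc k t (c' mod N) (Suc (k*(c' div N) + p mod k))
       = 1 + k*(t + N*(c' div N) + c' mod N) + p mod k"
    unfolding fc_def N_def by (simp add: divmod_aux[OF b])
  also have "\<dots> = 1 + k*(t + c') + p mod k"
  proof -
    have eq: "N*(c' div N) + c' mod N = c'" by simp
    show ?thesis by (metis add.assoc eq)
  qed
  also have "t + c' = p div k" using pt by (simp add: c'_def)
  also have "1 + k*(p div k) + p mod k = r" using r by (simp add: p_def)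
  finally show ?thesis by (simp add: N_def p_def c'_def)
qed

lemma construct:
  fixes k m t :: nat
  assumes k: "k > 0" and m: "m > 0"
  shows "isoData k m (m + t*k) (gc k m t) (hc k m t)"
proof
  fix l s
  assume l: "l < m + t*k"
  show "fst (gc k m t l s) < m" using m by (auto simp: gc_def)
  show "hc k m t (fst (gc k m t l s)) (snd (gc k m t l s)) = (l, s)"
  proof (cases "l < m - 1")
    case True thus ?thesis by (simp add: gc_def hc_def)
  next
    case False
    have c: "l - (m - 1) < 1 + t*k" using l False m by linarith
    show ?thesis
    proof (cases s)
      case 0
      thus ?thesis using False c by (simp add: gc_def hc_def fc_def)
    next
      case (Suc p)
      thus ?thesis using False hg_case[OF k c, where p=p and m=m] by (simp add: gc_def)
    qed
  qed
next
  fix i r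
  assume i: "i < m"
  show "fst (hc k m t i r) < m + t*k"
  proof -
    have A: "((r - 1) div k - t) mod (1+t*k) < 1 + t*k" by simp
    show ?thesis
    proof (cases "i < m - 1")
      case True thus ?thesis by (simp add: hc_def)
    next
      case False
      show ?thesis
      proof (cases "r < 1 + t*k")
        case True thus ?thesis using False m by (simp add: hc_def)
      next
        case F: False
        have "fst (hc k m t i r) = m - 1 + ((r - 1) div k - t) mod (1+t*k)"
          using False F by (simp add: hc_def)
        thus ?thesis using A m by linarith
      qed
    qed
  qed
  show "gc k m t (fst (hc k m t i r)) (snd (hc k m t i r)) = (i, r)"
  proof (cases "i < m - 1")
    case True thus ?thesis by (simp add: gc_def hc_def)
  next
    case False
    hence im: "i = m - 1" using i by simp
    show ?thesis
    proof (cases "r < 1 + t*k")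
      case True thus ?thesis using im by (simp add: gc_def hc_def fc_def)
    next
      case F: False
      thus ?thesis using im gh_case[OF k F] by (simp add: gc_def hc_def)
    qed
  qed
next
  fix l \<beta>
  assume l: "l < m + t*k"
  show "\<exists>i' h. \<forall>b<k. gc k m t l (1+k*\<beta>+b) = (i', 1+k*h+b)"
  proof (cases "l < m - 1")
    case True thus ?thesis by (auto simp: gc_def)
  next
    case False
    have "\<forall>b<k. gc k m t l (1+k*\<beta>+b) = (m - 1, 1+k*(t + (1+t*k)*\<beta> + (l - (m - 1)))+b)"
      using False by (auto simp: gc_def fc_def divmod_aux)
    thus ?thesis by blast
  qed
qed

theorem lemma1:
  fixes k m n :: nat
  assumes "k > 0" and "m > 0" and "n > 0" and "m mod k = n mod k"
  shows "free_iso k m n"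
proof (cases "m \<le> n")
  case True
  obtain t where t: "n = m + t*k"
    using mod_eq_nat1E[OF assms(4)[symmetric] True] by (metis mult.commute)
  show ?thesis using isoData.iso[OF construct[OF assms(1,2), of t]] t by simp
next
  case False
  obtain t where t: "m = n + t*k"
    using mod_eq_nat1E[OF assms(4)] False by (metis mult.commute nat_le_linear)
  show ?thesis using free_iso_sym[OF isoData.iso[OF construct[OF assms(1,3), of t]]] t by simp
qed

end
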